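(* Let $N\ge1$, $R>0$, $m>1$, $p>1$, $\gamma>0$, $k\in\mathbb N$, $\alpha,\beta\in\mathbb R$ with $N+\alpha-m>0$ and $\beta-\alpha+1>0$. Let $g:[0,\infty)\to[0,\infty)$ be continuous and nondecreasing, $g_k(s)=g(\min\{k,s\})$ for $s\ge 0$ (extended to $s<0$ by $g_k(s)=g(\max\{-k,\min\{k,s\}\})$ where defined, in particular only nonnegative arguments matter on the cone below), and let $a:[0,\infty)\to(0,\infty)$ be continuous with $c_1\le a\le c_2$ for constants $0<c_1\le c_2$. Let $X=C[0,R]$ with the sup norm and $\mathcal C=\{v\in X: v\ge0,\ v(R)=0\}$. Define $$F(v)(r)=\int_r^R\Big[\frac{(a(s)+g_k(v(s)))^\gamma}{s^{N+\alpha-1}}\int_0^s\tau^{N+\beta-1}|v(\tau)|^p\,d\tau\Big]^{\frac1{m-1}}ds.$$ Then $F$ is compact and $F(\mathcal C)\subset\mathcal C$. *)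

theory Defs
  imports "HOL-Analysis.Analysis"
begin

text \<open>Sup norm on C[0,R]; elements of X = C[0,R] are represented by functions
  real \<Rightarrow> real, only their values on [0,R] being relevant.\<close>
definition supn :: "real \<Rightarrow> (real \<Rightarrow> real) \<Rightarrow> real" where
  "supn R v = (SUP x\<in>{0..R}. \<bar>v x\<bar>)"

definition cone :: "real \<Rightarrow> (real \<Rightarrow> real) set" where
  "cone R = {v. continuous_on {0..R} v \<and> (\<forall>x\<in>{0..R}. 0 \<le> v x) \<and> v R = 0}"

definition gk :: "nat \<Rightarrow> (real \<Rightarrow> real) \<Rightarrow> real \<Rightarrow> real" where
  "gk k g s = g (max (- real k) (min (real k) s))"

definition Fop :: "nat \<Rightarrow> real \<Rightarrow> real \<Rightarrow> real \<Rightarrow> real \<Rightarrow> real \<Rightarrow> (real \<Rightarrow> real)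
    \<Rightarrow> (real \<Rightarrow> real) \<Rightarrow> nat \<Rightarrow> real \<Rightarrow> (real \<Rightarrow> real) \<Rightarrow> real \<Rightarrow> real" where
  "Fop N \<alpha> \<beta> m p \<gamma> a g k R v r =
     integral {r..R} (\<lambda>s. ((a s + gk k g (v s)) powr \<gamma> / s powr (real N + \<alpha> - 1)
        * integral {0..s} (\<lambda>\<tau>. \<tau> powr (real N + \<beta> - 1) * \<bar>v \<tau>\<bar> powr p)) powr (1 / (m - 1)))"

text \<open>A (possibly nonlinear) operator F defined on D \<subseteq> C[0,R] is compact if it is
  continuous w.r.t. the sup norm and maps bounded sets to relatively compact sets of
  C[0,R] (sequential form: every bounded sequence in D has a subsequence whose images
  converge uniformly on [0,R] to some u in C[0,R]).\<close>
definition compact_op :: "real \<Rightarrow> (real \<Rightarrow> real) set \<Rightarrow> ((real \<Rightarrow> real) \<Rightarrow> (real \<Rightarrow> real)) \<Rightarrow> bool" where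
  "compact_op R D F \<longleftrightarrow>
     (\<forall>v\<in>D. \<forall>\<epsilon>::real>0. \<exists>\<delta>::real>0. \<forall>w\<in>D. supn R (\<lambda>x. w x - v x) < \<delta> \<longrightarrow>
         supn R (\<lambda>x. F w x - F v x) < \<epsilon>) \<and>
     (\<forall>vs. (\<forall>n. vs n \<in> D) \<and> (\<exists>M::real. \<forall>n. supn R (vs n) \<le> M) \<longrightarrow>
        (\<exists>(\<sigma>::nat\<Rightarrow>nat) u. strict_mono \<sigma> \<and> continuous_on {0..R} u \<and>
           (\<lambda>n. supn R (\<lambda>x. F (vs (\<sigma> n)) x - u x)) \<longlonglongrightarrow> 0))"

end

theory Submission
  imports Defs "HOL-Complex_Analysis.Great_Picard"
begin

lemma supn_upper:
  assumes "continuous_on {0..R} f" "x \<in> {0..R}"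
  shows "\<bar>f x\<bar> \<le> supn R f"
proof -
  have "compact ((\<lambda>x. \<bar>f x\<bar>) ` {0..R})"
    by (intro compact_continuous_image continuous_intros assms) simp
  then have "bdd_above ((\<lambda>x. \<bar>f x\<bar>) ` {0..R})"
    by (meson bounded_imp_bdd_above compact_imp_bounded)
  then show ?thesis unfolding supn_def using assms(2) by (rule cSUP_upper2) simp
qed

lemma supn_least:
  assumes "0 \<le> R" "\<And>x. x \<in> {0..R} \<Longrightarrow> \<bar>f x\<bar> \<le> B"
  shows "supn R f \<le> B"
  unfolding supn_def using assms by (intro cSUP_least) auto

lemma supn_nonneg:
  assumes "continuous_on {0..R} f" "0 \<le> R"
  shows "0 \<le> supn R f"
  using supn_upper[OF assms(1), of 0] assms by force

context
  fixes N k :: nat and R m p \<gamma> \<alpha> \<beta> c1 c2 :: real and a g :: "real \<Rightarrow> real"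
  assumes N1: "N \<ge> 1" and R0: "R > 0" and m1: "m > 1" and p1: "p > 1" and g0: "\<gamma> > 0"
    and Na: "real N + \<alpha> - m > 0" and ba: "\<beta> - \<alpha> + 1 > 0"
    and gc: "continuous_on {0..} g" and gm: "mono_on {0..} g" and gnn: "\<forall>s\<ge>0. g s \<ge> 0"
    and ac: "continuous_on {0..} a" and c1p: "0 < c1" and c12: "c1 \<le> c2"
    and abd: "\<forall>s\<ge>0. c1 \<le> a s \<and> a s \<le> c2"
begin

definition "e1 = real N + \<beta> - 1"
definition "e2 = real N + \<alpha> - 1"
definition "q = 1 / (m - 1)"
definition "th = \<beta> - \<alpha> + 1"
definition "B = c2 + g (real k)"

lemma e1: "e1 > -1" using Na ba m1 unfolding e1_def by simp
lemma e2: "e2 > 0" using Na m1 unfolding e2_def by simp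
lemma qpos: "q > 0" using m1 unfolding q_def by simp
lemma thpos: "th > 0" using ba unfolding th_def by simp
lemma e12: "e1 + 1 - e2 = th" unfolding e1_def e2_def th_def by simp

definition "H v s = integral {0..s} (\<lambda>\<tau>. \<tau> powr e1 * \<bar>v \<tau>\<bar> powr p)"
definition "A v s = a s + gk k g (v s)"
definition "Phi v s = ((A v s) powr \<gamma> / s powr e2 * H v s) powr q"

lemma Fop_eq: "Fop N \<alpha> \<beta> m p \<gamma> a g k R v r = integral {r..R} (Phi v)"
  unfolding Fop_def Phi_def A_def H_def e1_def e2_def q_def by simp

lemma gk_bd:
  assumes "x \<ge> 0" shows "0 \<le> gk k g x \<and> gk k g x \<le> g (real k)"
proof -
  have "max (- real k) (min (real k) x) = min (real k) x" using assms by simp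
  moreover have "g (min (real k) x) \<le> g (real k)"
    using gm assms by (intro mono_onD[OF gm]) auto
  ultimately show ?thesis unfolding gk_def using gnn assms by simp
qed

lemma A_bd:
  assumes "s \<ge> 0" "v s \<ge> 0" shows "c1 \<le> A v s \<and> A v s \<le> B"
  using gk_bd[OF assms(2)] abd assms(1) unfolding A_def B_def by force

lemma cone_cont: "v \<in> cone R \<Longrightarrow> continuous_on {0..R} v"
  and cone_nn: "v \<in> cone R \<Longrightarrow> x \<in> {0..R} \<Longrightarrow> 0 \<le> v x"
  unfolding cone_def by auto

lemma A_cont:
  assumes "v \<in> cone R" shows "continuous_on {0..R} (A v)"
proof -
  have c: "continuous_on {0..R} (\<lambda>s. max (- real k) (min (real k) (v s)))"
    using cone_cont[OF assms] by (intro continuous_intros)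
  have "continuous_on {0..R} (\<lambda>s. g (max (- real k) (min (real k) (v s))))"
    by (rule continuous_on_compose2[OF gc c]) (auto dest: cone_nn[OF assms])
  moreover have "continuous_on {0..R} a" using ac by (rule continuous_on_subset) auto
  ultimately show ?thesis unfolding A_def gk_def by (intro continuous_intros)
qed

lemma integrand_int:
  assumes "v \<in> cone R" "s \<in> {0..R}"
  shows "(\<lambda>\<tau>. \<tau> powr e1 * \<bar>v \<tau>\<bar> powr p) integrable_on {0..s}"
proof -
  have cs: "continuous_on {0..s} v"
    by (rule continuous_on_subset[OF cone_cont[OF assms(1)]]) (use assms(2) in auto)
  have "(\<lambda>\<tau>. \<bar>v \<tau>\<bar> powr p * \<tau> powr e1) absolutely_integrable_on {0..s}"
  proof (rule absolutely_integrable_bounded_measurable_product_real)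
    have c: "continuous_on {0..s} (\<lambda>\<tau>. \<bar>v \<tau>\<bar> powr p)"
      using cs p1 by (intro continuous_on_powr' continuous_intros) auto
    then show "(\<lambda>\<tau>. \<bar>v \<tau>\<bar> powr p) \<in> borel_measurable (lebesgue_on {0..s})"
      by (intro continuous_imp_measurable_on_sets_lebesgue) auto
    show "bounded ((\<lambda>\<tau>. \<bar>v \<tau>\<bar> powr p) ` {0..s})"
      by (intro compact_imp_bounded compact_continuous_image c) simp
    show "(\<lambda>\<tau>. \<tau> powr e1) absolutely_integrable_on {0..s}"
      using integrable_on_powr_from_0[OF e1, of s] assms(2)
      by (intro nonnegative_absolutely_integrable_1) auto
  qed auto
  then have "(\<lambda>\<tau>. \<bar>v \<tau>\<bar> powr p * \<tau> powr e1) integrable_on {0..s}"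
    by (simp add: absolutely_integrable_on_def)
  then show ?thesis by (simp add: mult.commute)
qed

definition "Q v s = H v s / s powr e2"
definition "K M = (B powr \<gamma> * (M powr p / (e1 + 1))) powr q * R powr (th * q)"

lemma Phi_Q: "Phi v s = (A v s powr \<gamma> * Q v s) powr q"
  unfolding Phi_def Q_def by (simp add: field_simps)

lemma H_bd:
  assumes "v \<in> cone R" "s \<in> {0..R}" "\<And>x. x \<in> {0..R} \<Longrightarrow> \<bar>v x\<bar> \<le> M"
  shows "0 \<le> H v s \<and> H v s \<le> M powr p * (s powr (e1 + 1) / (e1 + 1))"
proof
  show "0 \<le> H v s" unfolding H_def
    by (intro integral_nonneg integrand_int assms) auto
  have hi: "((\<lambda>\<tau>. M powr p * \<tau> powr e1) has_integral M powr p * (s powr (e1 + 1) / (e1 + 1))) {0..s}"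
    using has_integral_powr_from_0[OF e1, of s] assms(2) by (intro has_integral_mult_right) auto
  have "H v s \<le> integral {0..s} (\<lambda>\<tau>. M powr p * \<tau> powr e1)" unfolding H_def
  proof (rule integral_le)
    show "(\<lambda>\<tau>. \<tau> powr e1 * \<bar>v \<tau>\<bar> powr p) integrable_on {0..s}" by (rule integrand_int[OF assms(1,2)])
    show "(\<lambda>\<tau>. M powr p * \<tau> powr e1) integrable_on {0..s}" using hi by blast
    fix x assume x: "x \<in> {0..s}"
    then have "\<bar>v x\<bar> \<le> M" using assms(2,3) by auto
    then have "\<bar>v x\<bar> powr p \<le> M powr p" using p1 by (intro powr_mono2) auto
    then show "x powr e1 * \<bar>v x\<bar> powr p \<le> M powr p * x powr e1"
      by (metis mult.commute mult_left_mono powr_ge_zero)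
  qed
  then show "H v s \<le> M powr p * (s powr (e1 + 1) / (e1 + 1))" using hi integral_unique by metis
qed

lemma Q_bd:
  assumes "v \<in> cone R" "s \<in> {0..R}" "\<And>x. x \<in> {0..R} \<Longrightarrow> \<bar>v x\<bar> \<le> M"
  shows "0 \<le> Q v s \<and> Q v s \<le> M powr p / (e1 + 1) * s powr th"
proof (cases "s = 0")
  case True then show ?thesis
    using thpos by (simp add: Q_def H_def)
next
  case False
  then have s: "s > 0" using assms(2) by auto
  note h = H_bd[OF assms]
  have "Q v s \<le> M powr p * (s powr (e1 + 1) / (e1 + 1)) / s powr e2" unfolding Q_def
    using h by (intro divide_right_mono) auto
  also have "\<dots> = M powr p / (e1 + 1) * (s powr (e1 + 1) / s powr e2)" by simp
  also have "s powr (e1 + 1) / s powr e2 = s powr th" using e12 s by (simp add: powr_diff[symmetric])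
  finally show ?thesis using h unfolding Q_def by simp
qed

lemma Phi_bd:
  assumes "v \<in> cone R" "s \<in> {0..R}" "\<And>x. x \<in> {0..R} \<Longrightarrow> \<bar>v x\<bar> \<le> M"
  shows "0 \<le> Phi v s \<and> Phi v s \<le> K M"
proof
  show "0 \<le> Phi v s" unfolding Phi_def by simp
  note Qb = Q_bd[OF assms]
  have Ab: "c1 \<le> A v s \<and> A v s \<le> B" using A_bd assms(2) cone_nn[OF assms(1,2)] by auto
  have M0: "M \<ge> 0" using assms(3)[of 0] R0 by force
  have "A v s powr \<gamma> * Q v s \<le> B powr \<gamma> * (M powr p / (e1 + 1) * s powr th)"
    using Ab Qb c1p g0 by (intro mult_mono powr_mono2) auto
  then have "Phi v s \<le> (B powr \<gamma> * (M powr p / (e1 + 1) * s powr th)) powr q"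
    unfolding Phi_Q using Qb Ab c1p qpos by (intro powr_mono2) auto
  also have "\<dots> = (B powr \<gamma> * (M powr p / (e1 + 1))) powr q * (s powr th) powr q"
    using e1 Ab c1p by (subst powr_mult[symmetric]) (auto simp: mult.assoc)
  also have "(s powr th) powr q = s powr (th * q)" by (simp add: powr_powr)
  also have "\<dots> \<le> R powr (th * q)" using assms(2) thpos qpos by (intro powr_mono2) auto
  finally show "Phi v s \<le> K M" unfolding K_def by (simp add: mult_left_mono)
qed

lemma cone_bd:
  assumes "v \<in> cone R" obtains M where "\<And>x. x \<in> {0..R} \<Longrightarrow> \<bar>v x\<bar> \<le> M"
  using supn_upper[OF cone_cont[OF assms]] by blast

lemma H_cont: "v \<in> cone R \<Longrightarrow> continuous_on {0..R} (H v)"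
  unfolding H_def by (rule indefinite_integral_continuous_1[OF integrand_int]) (use R0 in auto)

lemma Q_cont:
  assumes v: "v \<in> cone R" shows "continuous_on {0..R} (Q v)"
proof -
  obtain M where M: "\<And>x. x \<in> {0..R} \<Longrightarrow> \<bar>v x\<bar> \<le> M" using cone_bd[OF v] by blast
  have c0: "continuous_on {0<..R} (Q v)" unfolding Q_def
    by (intro continuous_intros continuous_on_subset[OF H_cont[OF v]]) auto
  show ?thesis unfolding continuous_on_eq_continuous_within
  proof
    fix x assume x: "x \<in> {0..R}"
    show "continuous (at x within {0..R}) (Q v)"
    proof (cases "x = 0")
      case False
      then have x0: "x \<in> {0<..R}" using x by auto
      have "at x within {0..R} = at x within {0<..R}"
        by (rule at_within_nhd[of x "{0<..}"]) (use x0 in auto)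
      then show ?thesis using c0 x0 by (simp add: continuous_on_eq_continuous_within)
    next
      case True
      define C where "C = M powr p / (e1 + 1)"
      have cc: "continuous_on {0..R} (\<lambda>s. C * s powr th)"
        using thpos by (intro continuous_intros continuous_on_powr') auto
      then have l: "((\<lambda>s. C * s powr th) \<longlongrightarrow> 0) (at 0 within {0..R})"
        using R0 thpos unfolding continuous_on_def by (metis atLeastAtMost_iff less_imp_le mult_zero_right order_refl powr_0)
      have Q0: "Q v 0 = 0" by (simp add: Q_def H_def)
      have ev: "eventually (\<lambda>s. 0 \<le> Q v s \<and> Q v s \<le> C * s powr th) (at 0 within {0..R})"
        unfolding eventually_at_filter using Q_bd[OF v _ M] C_def
        by (intro always_eventually) auto
      have "(Q v \<longlongrightarrow> 0) (at 0 within {0..R})"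
        by (rule tendsto_sandwich[OF _ _ tendsto_const l]) (use ev in \<open>auto elim: eventually_mono\<close>)
      then show ?thesis using True Q0 by (simp add: continuous_within)
    qed
  qed
qed

lemma Phi_cont:
  assumes v: "v \<in> cone R" shows "continuous_on {0..R} (Phi v)"
proof -
  have Ap: "\<forall>s\<in>{0..R}. A v s > 0" using A_bd cone_nn[OF v] c1p by force
  obtain M where M: "\<And>x. x \<in> {0..R} \<Longrightarrow> \<bar>v x\<bar> \<le> M" using cone_bd[OF v] by blast
  have "continuous_on {0..R} (\<lambda>s. (A v s powr \<gamma> * Q v s) powr q)"
    using Ap Q_bd[OF v _ M] qpos
    by (intro continuous_on_powr' continuous_intros A_cont Q_cont v) auto
  then show ?thesis unfolding Phi_Q .
qed

lemma Phi_int: "v \<in> cone R \<Longrightarrow> {x..y} \<subseteq> {0..R} \<Longrightarrow> Phi v integrable_on {x..y}"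
  by (rule integrable_continuous_interval, rule continuous_on_subset[OF Phi_cont])

lemma Fop_fun: "Fop N \<alpha> \<beta> m p \<gamma> a g k R v = (\<lambda>r. integral {r..R} (Phi v))"
  by (rule ext) (rule Fop_eq)

lemma F_cone: "v \<in> cone R \<Longrightarrow> Fop N \<alpha> \<beta> m p \<gamma> a g k R v \<in> cone R"
proof -
  assume v: "v \<in> cone R"
  obtain M where M: "\<And>x. x \<in> {0..R} \<Longrightarrow> \<bar>v x\<bar> \<le> M" using cone_bd[OF v] by blast
  have "continuous_on {0..R} (\<lambda>r. integral {r..R} (Phi v))"
    by (rule indefinite_integral_continuous_1'[OF Phi_int[OF v]]) auto
  moreover have "0 \<le> integral {r..R} (Phi v)" if "r \<in> {0..R}" for r
    using that Phi_bd[OF v _ M] by (intro integral_nonneg Phi_int[OF v]) auto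
  ultimately show ?thesis unfolding Fop_fun cone_def by auto
qed

lemma K_nn: "0 \<le> K M" unfolding K_def by simp

lemma F_lip:
  assumes v: "v \<in> cone R" and M: "\<And>x. x \<in> {0..R} \<Longrightarrow> \<bar>v x\<bar> \<le> M"
    and x: "x \<in> {0..R}" and y: "y \<in> {0..R}"
  shows "\<bar>Fop N \<alpha> \<beta> m p \<gamma> a g k R v x - Fop N \<alpha> \<beta> m p \<gamma> a g k R v y\<bar> \<le> K M * \<bar>x - y\<bar>"
proof -
  have *: "\<bar>integral {x..R} (Phi v) - integral {y..R} (Phi v)\<bar> \<le> K M * \<bar>x - y\<bar>"
    if x: "x \<in> {0..R}" and y: "y \<in> {0..R}" and xy: "x \<le> y" for x y
  proof -
    have "integral {x..y} (Phi v) + integral {y..R} (Phi v) = integral {x..R} (Phi v)"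
      by (rule Henstock_Kurzweil_Integration.integral_combine) (use x y xy Phi_int[OF v, of x R] in auto)
    then have "integral {x..R} (Phi v) - integral {y..R} (Phi v) = integral {x..y} (Phi v)" by simp
    moreover have "norm (integral {x..y} (Phi v)) \<le> integral {x..y} (\<lambda>_. K M)"
      using x y xy Phi_bd[OF v _ M]
      by (intro integral_norm_bound_integral Phi_int[OF v]) auto
    ultimately show ?thesis using xy by (simp add: mult.commute)
  qed
  show ?thesis unfolding Fop_eq
  proof (cases "x \<le> y")
    case True then show "\<bar>integral {x..R} (Phi v) - integral {y..R} (Phi v)\<bar> \<le> K M * \<bar>x - y\<bar>"
      using *[OF x y] by simp
  next
    case False then show "\<bar>integral {x..R} (Phi v) - integral {y..R} (Phi v)\<bar> \<le> K M * \<bar>x - y\<bar>"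
      using *[OF y x] by (simp add: abs_minus_commute)
  qed
qed

lemma F_bd:
  assumes v: "v \<in> cone R" and M: "\<And>x. x \<in> {0..R} \<Longrightarrow> \<bar>v x\<bar> \<le> M"
    and x: "x \<in> {0..R}"
  shows "\<bar>Fop N \<alpha> \<beta> m p \<gamma> a g k R v x\<bar> \<le> K M * R"
proof -
  have "Fop N \<alpha> \<beta> m p \<gamma> a g k R v R = 0" unfolding Fop_eq by simp
  then have "\<bar>Fop N \<alpha> \<beta> m p \<gamma> a g k R v x\<bar> \<le> K M * \<bar>x - R\<bar>"
    using F_lip[OF v M x, of R] R0 by simp
  also have "\<dots> \<le> K M * R" using x K_nn by (intro mult_left_mono) auto
  finally show ?thesis .
qed

lemma F_compact:
  assumes vs: "\<forall>n. vs n \<in> cone R" and M0: "\<forall>n. supn R (vs n) \<le> M"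
  shows "\<exists>(\<sigma>::nat\<Rightarrow>nat) u. strict_mono \<sigma> \<and> continuous_on {0..R} u \<and>
           (\<lambda>n. supn R (\<lambda>x. Fop N \<alpha> \<beta> m p \<gamma> a g k R (vs (\<sigma> n)) x - u x)) \<longlonglongrightarrow> 0"
proof -
  let ?F = "\<lambda>n. Fop N \<alpha> \<beta> m p \<gamma> a g k R (vs n)"
  have M: "\<bar>vs n x\<bar> \<le> M" if "x \<in> {0..R}" for n x
    using supn_upper[OF cone_cont[OF vs[rule_format, of n]] that] M0[rule_format, of n] by linarith
  obtain u \<sigma> where u: "continuous_on {0..R} u" and sm: "strict_mono (\<sigma> :: nat \<Rightarrow> nat)"
    and uc: "\<And>e. 0 < e \<Longrightarrow> \<exists>N. \<forall>n x. n \<ge> N \<and> x \<in> {0..R} \<longrightarrow> norm (?F (\<sigma> n) x - u x) < e"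
  proof (rule Arzela_Ascoli[of "{0..R}" ?F "K M * R"])
    show "compact {0..R::real}" by simp
    show "norm (?F n x) \<le> K M * R" if "x \<in> {0..R}" for n x
      using F_bd[OF vs[rule_format] M that] by simp
    fix x e :: real assume x: "x \<in> {0..R}" and e: "0 < e"
    define d where "d = e / (K M + 1)"
    have "K M + 1 > 0" using K_nn[of M] by simp
    then have d: "d > 0" using e unfolding d_def by simp
    have Kd: "K M * d < e" unfolding d_def using e K_nn[of M] by (simp add: field_simps)
    show "\<exists>d>0. \<forall>n y. y \<in> {0..R} \<and> norm (x - y) < d \<longrightarrow> norm (?F n x - ?F n y) < e"
    proof (intro exI[of _ d] conjI allI impI d)
      fix n y assume y: "y \<in> {0..R} \<and> norm (x - y) < d"
      have "\<bar>?F n x - ?F n y\<bar> \<le> K M * \<bar>x - y\<bar>" using F_lip[OF vs[rule_format] M x] y by auto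
      also have "\<dots> \<le> K M * d" using y K_nn by (intro mult_left_mono) auto
      finally show "norm (?F n x - ?F n y) < e" using Kd by simp
    qed
  qed blast
  have "(\<lambda>n. supn R (\<lambda>x. ?F (\<sigma> n) x - u x)) \<longlonglongrightarrow> 0"
  proof (rule LIMSEQ_I)
    fix r :: real assume r: "0 < r"
    obtain N0 where N0: "\<forall>n x. n \<ge> N0 \<and> x \<in> {0..R} \<longrightarrow> norm (?F (\<sigma> n) x - u x) < r / 2"
      using uc[of "r/2"] r by auto
    show "\<exists>no. \<forall>n\<ge>no. norm (supn R (\<lambda>x. ?F (\<sigma> n) x - u x) - 0) < r"
    proof (intro exI allI impI)
      fix n assume n: "n \<ge> N0"
      have c: "continuous_on {0..R} (\<lambda>x. ?F (\<sigma> n) x - u x)"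
        using F_cone[OF vs[rule_format]] u unfolding cone_def by (intro continuous_intros) auto
      have "supn R (\<lambda>x. ?F (\<sigma> n) x - u x) \<le> r / 2"
        using N0 n R0 by (intro supn_least) (auto intro: less_imp_le)
      moreover have "0 \<le> supn R (\<lambda>x. ?F (\<sigma> n) x - u x)" using supn_nonneg[OF c] R0 by simp
      ultimately show "norm (supn R (\<lambda>x. ?F (\<sigma> n) x - u x) - 0) < r" using r by simp
    qed
  qed
  then show ?thesis using sm u by blast
qed

lemma Phi_conv:
  assumes ws: "\<And>n. ws n \<in> cone R" and v: "v \<in> cone R"
    and M: "\<And>n x. x \<in> {0..R} \<Longrightarrow> \<bar>ws n x\<bar> \<le> M"
    and conv: "\<And>x. x \<in> {0..R} \<Longrightarrow> (\<lambda>n. ws n x) \<longlonglongrightarrow> v x"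
    and s: "s \<in> {0..R}"
  shows "(\<lambda>n. Phi (ws n) s) \<longlonglongrightarrow> Phi v s"
proof (cases "s = 0")
  case True then show ?thesis by (simp add: Phi_def H_def)
next
  case False
  then have s0: "s > 0" using s by auto
  have "(\<lambda>n. integral {0..s} (\<lambda>\<tau>. \<tau> powr e1 * \<bar>ws n \<tau>\<bar> powr p))
          \<longlonglongrightarrow> integral {0..s} (\<lambda>\<tau>. \<tau> powr e1 * \<bar>v \<tau>\<bar> powr p)"
  proof (rule dominated_convergence(2))
    show "(\<lambda>\<tau>. \<tau> powr e1 * \<bar>ws n \<tau>\<bar> powr p) integrable_on {0..s}" for n
      by (rule integrand_int[OF ws s])
    show "(\<lambda>\<tau>. M powr p * \<tau> powr e1) integrable_on {0..s}"
    proof -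
      have "0 \<le> s" using s by simp
      from has_integral_mult_right[OF has_integral_powr_from_0[OF e1 this], of "M powr p"]
      show ?thesis by blast
    qed
    show "norm (\<tau> powr e1 * \<bar>ws n \<tau>\<bar> powr p) \<le> M powr p * \<tau> powr e1" if "\<tau> \<in> {0..s}" for n \<tau>
    proof -
      have "\<bar>ws n \<tau>\<bar> powr p \<le> M powr p" using M[of \<tau> n] that s p1 by (intro powr_mono2) auto
      then have "\<tau> powr e1 * \<bar>ws n \<tau>\<bar> powr p \<le> M powr p * \<tau> powr e1"
        by (metis mult.commute mult_left_mono powr_ge_zero)
      then show ?thesis by (simp add: abs_mult)
    qed
    show "(\<lambda>n. \<tau> powr e1 * \<bar>ws n \<tau>\<bar> powr p) \<longlonglongrightarrow> \<tau> powr e1 * \<bar>v \<tau>\<bar> powr p" if "\<tau> \<in> {0..s}" for \<tau>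
      using conv[of \<tau>] that s p1 by (intro tendsto_intros) auto
  qed
  then have Hc: "(\<lambda>n. H (ws n) s) \<longlonglongrightarrow> H v s" unfolding H_def .
  have t: "(\<lambda>n. max (- real k) (min (real k) (ws n s))) \<longlonglongrightarrow> max (- real k) (min (real k) (v s))"
    by (intro tendsto_intros conv[OF s])
  have ev: "\<forall>\<^sub>F n in sequentially. max (- real k) (min (real k) (ws n s)) \<in> {0..}"
  proof (intro always_eventually allI)
    fix n have "0 \<le> ws n s" by (rule cone_nn[OF ws s])
    then show "max (- real k) (min (real k) (ws n s)) \<in> {0..}" by auto
  qed
  have l: "max (- real k) (min (real k) (v s)) \<in> {0..}" using cone_nn[OF v s] by auto
  have "(\<lambda>n. g (max (- real k) (min (real k) (ws n s)))) \<longlonglongrightarrow> g (max (- real k) (min (real k) (v s)))"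
    by (rule continuous_on_tendsto_compose[OF gc t l ev])
  then have Ac: "(\<lambda>n. A (ws n) s) \<longlonglongrightarrow> A v s" unfolding A_def gk_def by (intro tendsto_intros)
  have Ap: "A v s > 0" using A_bd[of s v] s cone_nn[OF v s] c1p by auto
  have Hn: "H (ws n) s \<ge> 0" for n using H_bd[OF ws s M] by blast
  have "(\<lambda>n. ((A (ws n) s) powr \<gamma> / s powr e2 * H (ws n) s) powr q)
     \<longlonglongrightarrow> ((A v s) powr \<gamma> / s powr e2 * H v s) powr q"
    using Ac Hc Ap Hn qpos s0 by (intro tendsto_intros) auto
  then show ?thesis unfolding Phi_def .
qed

lemma F_cont:
  assumes v: "v \<in> cone R" and e: "\<epsilon> > 0"
  shows "\<exists>\<delta>>0. \<forall>w\<in>cone R. supn R (\<lambda>x. w x - v x) < \<delta> \<longrightarrow>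
         supn R (\<lambda>x. Fop N \<alpha> \<beta> m p \<gamma> a g k R w x - Fop N \<alpha> \<beta> m p \<gamma> a g k R v x) < \<epsilon>"
proof (rule ccontr)
  let ?F = "Fop N \<alpha> \<beta> m p \<gamma> a g k R"
  assume "\<not> ?thesis"
  then have "\<forall>n. \<exists>w. w \<in> cone R \<and> supn R (\<lambda>x. w x - v x) < inverse (real (Suc n)) \<and>
      \<not> supn R (\<lambda>x. ?F w x - ?F v x) < \<epsilon>"
    by (metis inverse_positive_iff_positive of_nat_0_less_iff zero_less_Suc)
  then obtain ws where ws: "\<And>n. ws n \<in> cone R"
    and wd: "\<And>n. supn R (\<lambda>x. ws n x - v x) < inverse (real (Suc n))"
    and wF: "\<And>n. \<not> supn R (\<lambda>x. ?F (ws n) x - ?F v x) < \<epsilon>"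
    by metis
  obtain Mv where Mv: "\<And>x. x \<in> {0..R} \<Longrightarrow> \<bar>v x\<bar> \<le> Mv" using cone_bd[OF v] by blast
  have dn: "\<bar>ws n x - v x\<bar> < inverse (real (Suc n))" if "x \<in> {0..R}" for n x
  proof -
    have "continuous_on {0..R} (\<lambda>x. ws n x - v x)"
      using cone_cont[OF ws] cone_cont[OF v] by (intro continuous_intros)
    from supn_upper[OF this that] wd[of n] show ?thesis by linarith
  qed
  define M where "M = Mv + 1"
  have Mw: "\<bar>ws n x\<bar> \<le> M" if "x \<in> {0..R}" for n x
  proof -
    have "inverse (real (Suc n)) \<le> 1" by (simp add: inverse_le_1_iff)
    then show ?thesis using dn[OF that, of n] Mv[OF that] unfolding M_def by linarith
  qed
  have Mv': "\<bar>v x\<bar> \<le> M" if "x \<in> {0..R}" for x using Mv[OF that] unfolding M_def by simp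
  have conv: "(\<lambda>n. ws n x) \<longlonglongrightarrow> v x" if x: "x \<in> {0..R}" for x
  proof (rule LIM_zero_cancel, rule Lim_null_comparison[OF _ LIMSEQ_inverse_real_of_nat])
    show "\<forall>\<^sub>F n in sequentially. norm (ws n x - v x) \<le> inverse (real (Suc n))"
      using dn[OF x] by (intro always_eventually allI) (simp add: less_imp_le)
  qed
  define D where "D n s = \<bar>Phi (ws n) s - Phi v s\<bar>" for n s
  have Dl: "(\<lambda>n. integral {0..R} (D n)) \<longlonglongrightarrow> integral {0..R} (\<lambda>_. 0::real)"
  proof (rule dominated_convergence(2))
    show "D n integrable_on {0..R}" for n unfolding D_def
      by (intro integrable_continuous_interval continuous_intros Phi_cont ws v)
    show "(\<lambda>_. 2 * K M) integrable_on {0..R}" by (rule integrable_const_ivl)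
    show "norm (D n s) \<le> 2 * K M" if "s \<in> {0..R}" for n s
      using Phi_bd[OF ws[of n] that Mw[where n=n]] Phi_bd[OF v that Mv'] unfolding D_def by (auto simp: abs_le_iff)
    show "(\<lambda>n. D n s) \<longlonglongrightarrow> 0" if "s \<in> {0..R}" for s
      unfolding D_def using Phi_conv[OF ws v Mw conv that]
      by (intro tendsto_rabs_zero LIM_zero) auto
  qed
  then obtain n0 where n0: "\<bar>integral {0..R} (D n0)\<bar> < \<epsilon>"
    using e by (auto dest!: LIMSEQ_D)
  have "supn R (\<lambda>x. ?F (ws n0) x - ?F v x) \<le> integral {0..R} (D n0)"
  proof (rule supn_least)
    show "0 \<le> R" using R0 by simp
    fix r assume r: "r \<in> {0..R}"
    have i1: "Phi (ws n0) integrable_on {r..R}" "Phi v integrable_on {r..R}"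
      using r by (auto intro!: Phi_int ws v)
    have iD: "D n0 integrable_on {r..R}" "D n0 integrable_on {0..R}" unfolding D_def
        using r by (auto intro!: integrable_continuous_interval continuous_intros Phi_cont ws v
             intro: continuous_on_subset)
    have "\<bar>?F (ws n0) r - ?F v r\<bar> = norm (integral {r..R} (\<lambda>s. Phi (ws n0) s - Phi v s))"
      unfolding Fop_eq using i1 by (simp add: integral_diff)
    also have "\<dots> \<le> integral {r..R} (D n0)" using iD(1) unfolding D_def
      using i1 by (intro integral_norm_bound_integral integrable_diff) auto
    also have "\<dots> \<le> integral {0..R} (D n0)"
    proof (rule integral_subset_le)
      show "D n0 integrable_on {r..R}" "D n0 integrable_on {0..R}" by (rule iD)+
    qed (use r in \<open>auto simp: D_def\<close>)
    finally show "\<bar>?F (ws n0) r - ?F v r\<bar> \<le> integral {0..R} (D n0)" .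
  qed
  then show False using wF[of n0] n0 by linarith
qed

end

theorem lemma6p1:
  fixes N k :: nat and R m p \<gamma> \<alpha> \<beta> c1 c2 :: real and a g :: "real \<Rightarrow> real"
  assumes "N \<ge> 1" and "R > 0" and "m > 1" and "p > 1" and "\<gamma> > 0"
    and "real N + \<alpha> - m > 0" and "\<beta> - \<alpha> + 1 > 0"
    and "continuous_on {0..} g" and "mono_on {0..} g" and "\<forall>s\<ge>0. g s \<ge> 0"
    and "continuous_on {0..} a" and "0 < c1" and "c1 \<le> c2"
    and "\<forall>s\<ge>0. c1 \<le> a s \<and> a s \<le> c2"
  shows "compact_op R (cone R) (Fop N \<alpha> \<beta> m p \<gamma> a g k R)
         \<and> (\<forall>v\<in>cone R. Fop N \<alpha> \<beta> m p \<gamma> a g k R v \<in> cone R)"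
  unfolding compact_op_def
  using F_cont[OF assms] F_compact[OF assms] F_cone[OF assms] by blast

end
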